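(* Let $H$ be a bipartite graph with bipartition $(V_1,V_2)$, $n$ vertices and $m$ edges, such that there are $r\ge1$ vertices $u_1,\ldots,u_r\in V_1$ each adjacent to all vertices of $V_2$, and every vertex of $V_1$ has degree at least $d$, where $d\ge1$ is an integer. Then for every graph $G$, $$t_{H}(G) \geq (2n)^{-2n^2}\,t_{K_{r,d}}(G)^{\frac{m}{rd}}.$$
   Context: All graphs are finite and simple. A homomorphism from $F$ to $G$ is a map $V(F)\to V(G)$ sending edges to edges; $h_F(G)$ is the number of homomorphisms and $t_F(G)=h_F(G)/|V(G)|^{|V(F)|}$. $K_{r,d}$ is the complete bipartite graph with parts of sizes $r$ and $d$. *)

theory Defs
  imports Complex_Main "HOL-Library.FuncSet"
begin

definition simple_graph :: "'a set \<Rightarrow> ('a \<Rightarrow> 'a \<Rightarrow> bool) \<Rightarrow> bool" where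
  "simple_graph V E \<longleftrightarrow> finite V \<and> (\<forall>x y. E x y \<longrightarrow> x \<in> V \<and> y \<in> V)
     \<and> (\<forall>x y. E x y \<longrightarrow> E y x) \<and> (\<forall>x. \<not> E x x)"

definition homs :: "'a set \<Rightarrow> ('a \<Rightarrow> 'a \<Rightarrow> bool) \<Rightarrow> 'b set \<Rightarrow> ('b \<Rightarrow> 'b \<Rightarrow> bool) \<Rightarrow> ('a \<Rightarrow> 'b) set" where
  "homs VF EF VG EG = {f \<in> VF \<rightarrow>\<^sub>E VG. \<forall>x y. EF x y \<longrightarrow> EG (f x) (f y)}"

definition hom_count :: "'a set \<Rightarrow> ('a \<Rightarrow> 'a \<Rightarrow> bool) \<Rightarrow> 'b set \<Rightarrow> ('b \<Rightarrow> 'b \<Rightarrow> bool) \<Rightarrow> nat" where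
  "hom_count VF EF VG EG = card (homs VF EF VG EG)"

definition hom_density :: "'a set \<Rightarrow> ('a \<Rightarrow> 'a \<Rightarrow> bool) \<Rightarrow> 'b set \<Rightarrow> ('b \<Rightarrow> 'b \<Rightarrow> bool) \<Rightarrow> real" where
  "hom_density VF EF VG EG = real (hom_count VF EF VG EG) / real (card VG) ^ card VF"

definition edge_set :: "('a \<Rightarrow> 'a \<Rightarrow> bool) \<Rightarrow> 'a set set" where
  "edge_set E = {{x, y} | x y. E x y}"

definition degree :: "('a \<Rightarrow> 'a \<Rightarrow> bool) \<Rightarrow> 'a \<Rightarrow> nat" where
  "degree E x = card {y. E x y}"

definition Kbip_V :: "nat \<Rightarrow> nat \<Rightarrow> (nat + nat) set" where
  "Kbip_V r d = Inl ` {..<r} \<union> Inr ` {..<d}"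

definition Kbip_E :: "nat \<Rightarrow> nat \<Rightarrow> (nat + nat) \<Rightarrow> (nat + nat) \<Rightarrow> bool" where
  "Kbip_E r d x y \<longleftrightarrow> (\<exists>i<r. \<exists>j<d. (x = Inl i \<and> y = Inr j) \<or> (x = Inr j \<and> y = Inl i))"

end

theory Submission
  imports Defs
begin

lemma card_filter_sum:
  "finite X \<Longrightarrow> card {x\<in>X. P x} = (\<Sum>x\<in>X. if P x then 1 else 0 :: nat)"
  using sum.inter_filter[of X "\<lambda>_. 1::nat" P] by simp

lemma card_filter_swap:
  assumes "finite A" "finite B"
  shows "(\<Sum>a\<in>A. card {b\<in>B. R a b}) = (\<Sum>b\<in>B. card {a\<in>A. R a b})"
proof -
  show ?thesis using assms by (simp add: card_filter_sum sum.swap[of _ A B])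
qed

lemma card_PiE_restrict:
  assumes "finite A" "S \<subseteq> A"
  shows "card {\<phi> \<in> A \<rightarrow>\<^sub>E F. Q (restrict \<phi> S)} = card {\<psi> \<in> S \<rightarrow>\<^sub>E F. Q \<psi>} * card F ^ card (A - S)"
proof -
  let ?B = "{\<psi> \<in> S \<rightarrow>\<^sub>E F. Q \<psi>}" and ?C = "(A - S) \<rightarrow>\<^sub>E F"
  let ?g = "\<lambda>(\<psi>, \<chi>). (\<lambda>w. if w \<in> S then \<psi> w else \<chi> w)"
  have inj: "inj_on ?g (?B \<times> ?C)"
  proof (rule inj_onI)
    fix p q assume hp: "p \<in> ?B \<times> ?C" "q \<in> ?B \<times> ?C" and ep: "?g p = ?g q"
    obtain \<psi> \<chi> where pq: "p = (\<psi>, \<chi>)" by (cases p)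
    obtain \<psi>' \<chi>' where qq: "q = (\<psi>', \<chi>')" by (cases q)
    have h: "\<psi> \<in> ?B" "\<chi> \<in> ?C" "\<psi>' \<in> ?B" "\<chi>' \<in> ?C" using hp pq qq by auto
    have e: "(\<lambda>w. if w \<in> S then \<psi> w else \<chi> w) = (\<lambda>w. if w \<in> S then \<psi>' w else \<chi>' w)"
      using ep pq qq by simp
    have "\<psi> = \<psi>'"
    proof
      fix w show "\<psi> w = \<psi>' w"
        using h fun_cong[OF e, of w] by (cases "w \<in> S") (auto simp: PiE_def extensional_def)
    qed
    moreover have "\<chi> = \<chi>'"
    proof
      fix w show "\<chi> w = \<chi>' w"
        using h fun_cong[OF e, of w] by (cases "w \<in> S") (auto simp: PiE_def extensional_def)
    qed
    ultimately show "p = q" using pq qq by simp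
  qed
  have img: "?g ` (?B \<times> ?C) = {\<phi> \<in> A \<rightarrow>\<^sub>E F. Q (restrict \<phi> S)}"
  proof (rule equalityI; rule subsetI)
    fix y assume "y \<in> ?g ` (?B \<times> ?C)"
    then obtain \<psi> \<chi> where h: "\<psi> \<in> S \<rightarrow>\<^sub>E F" "Q \<psi>" "\<chi> \<in> ?C" and y: "y = ?g (\<psi>, \<chi>)" by auto
    have 1: "?g (\<psi>, \<chi>) \<in> A \<rightarrow>\<^sub>E F" using h assms(2) by (auto simp: PiE_def Pi_def extensional_def)
    have "restrict (?g (\<psi>, \<chi>)) S = \<psi>" using h by (auto simp: restrict_def PiE_def extensional_def)
    then have "Q (restrict (?g (\<psi>, \<chi>)) S)" using h by simp
    with 1 y show "y \<in> {\<phi> \<in> A \<rightarrow>\<^sub>E F. Q (restrict \<phi> S)}" by simp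
  next
    fix \<phi> assume "\<phi> \<in> {\<phi> \<in> A \<rightarrow>\<^sub>E F. Q (restrict \<phi> S)}"
    then have h: "\<phi> \<in> A \<rightarrow>\<^sub>E F" "Q (restrict \<phi> S)" by auto
    have "\<phi> = ?g (restrict \<phi> S, restrict \<phi> (A - S))"
      using h(1) by (auto simp: restrict_def PiE_def extensional_def)
    moreover have "(restrict \<phi> S, restrict \<phi> (A - S)) \<in> ?B \<times> ?C"
      using h assms(2) by (auto simp: PiE_def Pi_def)
    ultimately show "\<phi> \<in> ?g ` (?B \<times> ?C)" by blast
  qed
  have "card {\<phi> \<in> A \<rightarrow>\<^sub>E F. Q (restrict \<phi> S)} = card (?B \<times> ?C)"
    using card_image[OF inj] img by simp
  also have "\<dots> = card ?B * card ?C" by (rule card_cartesian_product)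
  also have "card ?C = card F ^ card (A - S)" using assms by (simp add: card_PiE)
  finally show ?thesis .
qed


locale L23 =
  fixes V :: "'a set" and E :: "'a \<Rightarrow> 'a \<Rightarrow> bool"
    and V1 V2 U :: "'a set" and r d :: nat
    and VG :: "'b set" and EG :: "'b \<Rightarrow> 'b \<Rightarrow> bool"
  assumes H: "simple_graph V E"
    and part: "V1 \<union> V2 = V" "V1 \<inter> V2 = {}"
    and bip: "\<And>x y. E x y \<Longrightarrow> (x \<in> V1 \<and> y \<in> V2) \<or> (x \<in> V2 \<and> y \<in> V1)"
    and r: "r \<ge> 1" and U: "U \<subseteq> V1" "card U = r"
    and Ucomplete: "\<And>u v. u \<in> U \<Longrightarrow> v \<in> V2 \<Longrightarrow> E u v"
    and d: "d \<ge> 1" and deg: "\<And>v. v \<in> V1 \<Longrightarrow> degree E v \<ge> d"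
    and G: "simple_graph VG EG"
begin

definition CN :: "'b set \<Rightarrow> 'b set" where "CN T = {z\<in>VG. \<forall>t\<in>T. EG z t}"
definition nb :: "'a \<Rightarrow> 'a set" where "nb v = {y. E v y}"
abbreviation "W \<equiv> V1 - U"
abbreviation "s \<equiv> card V2"
abbreviation "NN \<equiv> card VG"
abbreviation "k v \<equiv> card (nb v)"
abbreviation "Cx x \<equiv> CN (x ` {..<r})"

lemma finV: "finite V" using H by (simp add: simple_graph_def)
lemma finVG: "finite VG" using G by (simp add: simple_graph_def)
lemma finV1: "finite V1" using finV part by auto
lemma finV2: "finite V2" using finV part by auto
lemma finU: "finite U" using finV1 U finite_subset by auto
lemma finW: "finite W" using finV1 by auto
lemma symG: "EG x y \<Longrightarrow> EG y x" using G by (simp add: simple_graph_def)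
lemma symH: "E x y \<Longrightarrow> E y x" using H by (simp add: simple_graph_def)
lemma CN_sub: "CN T \<subseteq> VG" by (auto simp: CN_def)
lemma finCN: "finite (CN T)" using finVG CN_sub finite_subset by blast
lemma nb_sub: "v \<in> V1 \<Longrightarrow> nb v \<subseteq> V2" using bip part by (auto simp: nb_def)
lemma nb_U: "u \<in> U \<Longrightarrow> nb u = V2" using nb_sub U Ucomplete by (auto simp: nb_def)
lemma k_ge: "v \<in> V1 \<Longrightarrow> k v \<ge> d" using deg by (simp add: degree_def nb_def)
lemma k_le: "v \<in> V1 \<Longrightarrow> k v \<le> s" using nb_sub finV2 card_mono by blast
lemma finnb: "v \<in> V1 \<Longrightarrow> finite (nb v)" using nb_sub finV2 finite_subset by blast

lemma stepA:
  "hom_count (Kbip_V r d) (Kbip_E r d) VG EG \<le> (\<Sum>x\<in>{..<r} \<rightarrow>\<^sub>E VG. card (Cx x) ^ d)"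
proof -
  let ?S = "SIGMA x:{..<r} \<rightarrow>\<^sub>E VG. {..<d} \<rightarrow>\<^sub>E Cx x"
  let ?f = "\<lambda>f. (restrict (f \<circ> Inl) {..<r}, restrict (f \<circ> Inr) {..<d})"
  have fin: "finite ?S" using finVG finCN by (auto intro!: finite_SigmaI finite_PiE)
  have "inj_on ?f (homs (Kbip_V r d) (Kbip_E r d) VG EG)"
  proof (rule inj_onI)
    fix f g assume hf: "f \<in> homs (Kbip_V r d) (Kbip_E r d) VG EG" and hg: "g \<in> homs (Kbip_V r d) (Kbip_E r d) VG EG"
      and e: "?f f = ?f g"
    show "f = g"
    proof
      fix v show "f v = g v"
      proof (cases v)
        case (Inl i)
        have e1: "restrict (f \<circ> Inl) {..<r} = restrict (g \<circ> Inl) {..<r}" using e by simp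
        show ?thesis
        proof (cases "i < r")
          case True then show ?thesis using fun_cong[OF e1, of i] Inl by simp
        next
          case False
          then have "v \<notin> Kbip_V r d" using Inl by (auto simp: Kbip_V_def)
          then show ?thesis using hf hg by (auto simp: homs_def PiE_def extensional_def)
        qed
      next
        case (Inr i)
        have e1: "restrict (f \<circ> Inr) {..<d} = restrict (g \<circ> Inr) {..<d}" using e by simp
        show ?thesis
        proof (cases "i < d")
          case True then show ?thesis using fun_cong[OF e1, of i] Inr by simp
        next
          case False
          then have "v \<notin> Kbip_V r d" using Inr by (auto simp: Kbip_V_def)
          then show ?thesis using hf hg by (auto simp: homs_def PiE_def extensional_def)
        qed
      qed
    qed
  qed
  moreover have "?f ` (homs (Kbip_V r d) (Kbip_E r d) VG EG) \<subseteq> ?S"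
  proof
    fix y assume "y \<in> ?f ` (homs (Kbip_V r d) (Kbip_E r d) VG EG)"
    then obtain f where hf: "f \<in> homs (Kbip_V r d) (Kbip_E r d) VG EG" and y: "y = ?f f" by auto
    have 1: "restrict (f \<circ> Inl) {..<r} \<in> {..<r} \<rightarrow>\<^sub>E VG" using hf by (auto simp: homs_def Kbip_V_def)
    have 2: "restrict (f \<circ> Inr) {..<d} \<in> {..<d} \<rightarrow>\<^sub>E Cx (restrict (f \<circ> Inl) {..<r})"
    proof -
      have "\<And>j i. j < d \<Longrightarrow> i < r \<Longrightarrow> EG (f (Inr j)) (f (Inl i))"
        using hf by (auto simp: homs_def Kbip_E_def)
      moreover have "\<And>j. j < d \<Longrightarrow> f (Inr j) \<in> VG" using hf by (auto simp: homs_def Kbip_V_def)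
      ultimately show ?thesis by (auto simp: CN_def)
    qed
    show "y \<in> ?S" using 1 2 y by auto
  qed
  ultimately have "card (homs (Kbip_V r d) (Kbip_E r d) VG EG) \<le> card ?S"
    using card_inj_on_le fin by blast
  also have "card ?S = (\<Sum>x\<in>{..<r} \<rightarrow>\<^sub>E VG. card (Cx x) ^ d)"
    using finVG finCN by (simp add: card_PiE finite_PiE)
  finally show ?thesis by (simp add: hom_count_def)
qed

end
context L23 begin

lemma VUW: "V = U \<union> V2 \<union> W" using part U by auto

lemma C1:
  assumes X: "X \<subseteq> {..<r} \<rightarrow>\<^sub>E VG"
  shows "(\<Sum>x\<in>X. \<Sum>\<phi>\<in>{\<phi>\<in>V2 \<rightarrow>\<^sub>E Cx x. good \<phi>}. \<Prod>v\<in>W. card (CN (\<phi> ` nb v))) \<le> hom_count V E VG EG"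
proof -
  obtain b where b: "bij_betw b U {..<r}" using ex_bij_betw_finite_nat[OF finU] U(2) atLeast0LessThan by auto
  define Gs where "Gs x = {\<phi>\<in>V2 \<rightarrow>\<^sub>E Cx x. good \<phi>}" for x
  define Z where "Z \<phi> = (\<Pi>\<^sub>E v\<in>W. CN (\<phi> ` nb v))" for \<phi> :: "'a \<Rightarrow> 'b"
  define T where "T = (SIGMA x:X. SIGMA \<phi>:Gs x. Z \<phi>)"
  define F where "F = (\<lambda>(x::nat\<Rightarrow>'b, \<phi>::'a\<Rightarrow>'b, z::'a\<Rightarrow>'b). (\<lambda>w. if w\<in>U then x (b w) else if w\<in>V2 then \<phi> w else if w \<in> W then z w else undefined))"
  have finX: "finite X" using X finite_subset finite_PiE[of "{..<r}" "\<lambda>_. VG"] finVG by blast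
  have finGs: "finite (Gs x)" for x using finite_PiE[of V2 "\<lambda>_. Cx x"] finV2 finCN by (auto simp: Gs_def)
  have finZ: "finite (Z \<phi>)" for \<phi> using finW finCN by (auto simp: Z_def intro!: finite_PiE)
  have cardT: "card T = (\<Sum>x\<in>X. \<Sum>\<phi>\<in>Gs x. \<Prod>v\<in>W. card (CN (\<phi> ` nb v)))"
    unfolding T_def using finX finGs finZ finW by (simp add: card_PiE Z_def finite_SigmaI)
  have disj: "U \<inter> V2 = {}" using U part by auto
  have FT: "F ` T \<subseteq> homs V E VG EG"
  proof
    fix f assume "f \<in> F ` T"
    then obtain x \<phi> z where t: "x \<in> X" "\<phi> \<in> Gs x" "z \<in> Z \<phi>" and f: "f = F (x, \<phi>, z)"
      unfolding T_def by auto
    have fv: "f w = (if w\<in>U then x (b w) else if w\<in>V2 then \<phi> w else if w \<in> W then z w else undefined)" for w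
      using f by (simp add: F_def)
    have xv: "\<And>i. i < r \<Longrightarrow> x i \<in> VG" using t X by auto
    have phv: "\<And>w. w \<in> V2 \<Longrightarrow> \<phi> w \<in> Cx x" using t by (auto simp: Gs_def)
    have zv: "\<And>w. w \<in> W \<Longrightarrow> z w \<in> CN (\<phi> ` nb w)" using t by (auto simp: Z_def)
    have bU: "\<And>w. w \<in> U \<Longrightarrow> b w < r" using b by (auto simp: bij_betw_def)
    have "f \<in> V \<rightarrow>\<^sub>E VG"
    proof
      fix w assume "w \<in> V"
      have "\<And>w. w \<in> V2 \<Longrightarrow> \<phi> w \<in> VG" "\<And>w. w \<in> W \<Longrightarrow> z w \<in> VG"
        using phv zv CN_sub by blast+
      then show "f w \<in> VG" using fv xv bU \<open>w \<in> V\<close> by (auto simp: VUW)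
    next
      fix w assume "w \<notin> V"
      then show "f w = undefined" using fv VUW by auto
    qed
    moreover have "EG (f w1) (f w2)" if e: "E w1 w2" for w1 w2
    proof -
      have key: "EG (f a) (f c)" if ac: "a \<in> V1" "c \<in> V2" "E a c" for a c
      proof (cases "a \<in> U")
        case True
        have "\<phi> c \<in> Cx x" using phv ac by auto
        then have "EG (\<phi> c) (x (b a))" using bU True by (auto simp: CN_def)
        then show ?thesis using fv True ac disj symG by auto
      next
        case False
        then have aW: "a \<in> W" using ac by auto
        have "c \<in> nb a" using ac by (simp add: nb_def)
        then have "EG (z a) (\<phi> c)" using zv[OF aW] by (auto simp: CN_def)
        moreover have "c \<notin> U" using ac disj by auto
        moreover have "a \<notin> V2" using ac part by auto
        ultimately show ?thesis using fv aW ac False by auto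
      qed
      from bip[OF e] show ?thesis
      proof
        assume "w1 \<in> V1 \<and> w2 \<in> V2" then show ?thesis using key e by auto
      next
        assume "w1 \<in> V2 \<and> w2 \<in> V1" then show ?thesis using key symH[OF e] symG by blast
      qed
    qed
    ultimately show "f \<in> homs V E VG EG" by (simp add: homs_def)
  qed
  have injF: "inj_on F T"
  proof (rule inj_onI)
    fix p q assume hp: "p \<in> T" and hq: "q \<in> T" and e: "F p = F q"
    obtain x \<phi> z where p: "p = (x, \<phi>, z)" by (cases p) auto
    obtain x' \<phi>' z' where q: "q = (x', \<phi>', z')" by (cases q) auto
    have t: "x \<in> X" "\<phi> \<in> Gs x" "z \<in> Z \<phi>" using hp p by (auto simp: T_def)
    have t': "x' \<in> X" "\<phi>' \<in> Gs x'" "z' \<in> Z \<phi>'" using hq q by (auto simp: T_def)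
    have ew: "(if w\<in>U then x (b w) else if w\<in>V2 then \<phi> w else if w \<in> W then z w else undefined)
       = (if w\<in>U then x' (b w) else if w\<in>V2 then \<phi>' w else if w \<in> W then z' w else undefined)" for w
      using fun_cong[OF e, of w] p q by (simp add: F_def)
    have "x = x'"
    proof
      fix i show "x i = x' i"
      proof (cases "i < r")
        case True
        have "i \<in> b ` U" using b True by (simp add: bij_betw_def)
        then obtain u where "u \<in> U" "b u = i" by blast
        then show ?thesis using ew[of u] by simp
      next
        case False
        have "x \<in> {..<r} \<rightarrow>\<^sub>E VG" "x' \<in> {..<r} \<rightarrow>\<^sub>E VG" using t t' X by auto
        then show ?thesis using False by (auto simp: PiE_def extensional_def)
      qed
    qed
    moreover have "\<phi> = \<phi>'"
    proof
      fix w show "\<phi> w = \<phi>' w"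
      proof (cases "w \<in> V2")
        case True
        then have "w \<notin> U" using disj by blast
        then show ?thesis using ew[of w] True by simp
      next
        case False then show ?thesis using t t' by (auto simp: Gs_def PiE_def extensional_def)
      qed
    qed
    moreover have "z = z'"
    proof
      fix w show "z w = z' w"
      proof (cases "w \<in> W")
        case True
        then have "w \<notin> U" "w \<notin> V2" using part by auto
        then show ?thesis using ew[of w] True by simp
      next
        case False then show ?thesis using t t' by (auto simp: Z_def PiE_def extensional_def)
      qed
    qed
    ultimately show "p = q" using p q by simp
  qed
  have finH: "finite (homs V E VG EG)"
    using finite_PiE[of V "\<lambda>_. VG"] finV finVG by (auto simp: homs_def intro: finite_subset)
  have "card T \<le> card (homs V E VG EG)"
    using card_inj_on_le[OF injF FT finH] .
  then show ?thesis using cardT by (simp add: hom_count_def Gs_def)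
qed

end
context L23 begin

lemma C2:
  assumes X: "X \<subseteq> {..<r} \<rightarrow>\<^sub>E VG" and v: "v \<in> V1"
    and Gam: "\<forall>x\<in>X. real (card (Cx x)) \<le> \<Gamma>" "\<Gamma> \<ge> 0" and tau: "\<tau> \<ge> 0"
  shows "(\<Sum>x\<in>X. real (card {\<phi>\<in>V2 \<rightarrow>\<^sub>E Cx x. real (card (CN (\<phi> ` nb v))) ^ r < \<tau>}))
     \<le> \<Gamma> ^ (s - k v) * real NN ^ (k v) * \<tau>"
proof -
  define B where "B \<psi> = (real (card (CN (\<psi> ` nb v))) ^ r < \<tau>)" for \<psi> :: "'a \<Rightarrow> 'b"
  define R where "R x \<psi> = ((\<forall>i<r. \<forall>w\<in>nb v. EG (\<psi> w) (x i)) \<and> B \<psi>)" for x :: "nat \<Rightarrow> 'b" and \<psi>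
  have finX: "finite X" using X finite_subset finite_PiE[of "{..<r}" "\<lambda>_. VG"] finVG by blast
  have nbs: "nb v \<subseteq> V2" using nb_sub v .
  have fnb: "finite (nb v)" using finnb v .
  have img: "\<phi> ` nb v = restrict \<phi> (nb v) ` nb v" for \<phi> :: "'a \<Rightarrow> 'b" by auto
  have step1: "real (card {\<phi>\<in>V2 \<rightarrow>\<^sub>E Cx x. real (card (CN (\<phi> ` nb v))) ^ r < \<tau>})
      \<le> \<Gamma> ^ (s - k v) * real (card {\<psi>\<in>nb v \<rightarrow>\<^sub>E Cx x. B \<psi>})" if x: "x \<in> X" for x
  proof -
    have "card {\<phi>\<in>V2 \<rightarrow>\<^sub>E Cx x. real (card (CN (\<phi> ` nb v))) ^ r < \<tau>}
        = card {\<phi>\<in>V2 \<rightarrow>\<^sub>E Cx x. B (restrict \<phi> (nb v))}"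
      by (simp add: B_def img[symmetric])
    also have "\<dots> = card {\<psi>\<in>nb v \<rightarrow>\<^sub>E Cx x. B \<psi>} * card (Cx x) ^ (s - k v)"
      using card_PiE_restrict[OF finV2 nbs] card_Diff_subset[OF fnb nbs] by simp
    finally have "real (card {\<phi>\<in>V2 \<rightarrow>\<^sub>E Cx x. real (card (CN (\<phi> ` nb v))) ^ r < \<tau>})
        = real (card {\<psi>\<in>nb v \<rightarrow>\<^sub>E Cx x. B \<psi>}) * real (card (Cx x)) ^ (s - k v)" by simp
    also have "\<dots> \<le> real (card {\<psi>\<in>nb v \<rightarrow>\<^sub>E Cx x. B \<psi>}) * \<Gamma> ^ (s - k v)"
      using Gam x by (intro mult_left_mono power_mono) auto
    finally show ?thesis by (simp add: mult.commute)
  qed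
  have eqset: "{\<psi>\<in>nb v \<rightarrow>\<^sub>E Cx x. B \<psi>} = {\<psi>\<in>nb v \<rightarrow>\<^sub>E VG. R x \<psi>}" for x
    by (auto simp: R_def CN_def PiE_def Pi_def)
  have "(\<Sum>x\<in>X. real (card {\<phi>\<in>V2 \<rightarrow>\<^sub>E Cx x. real (card (CN (\<phi> ` nb v))) ^ r < \<tau>}))
      \<le> (\<Sum>x\<in>X. \<Gamma> ^ (s - k v) * real (card {\<psi>\<in>nb v \<rightarrow>\<^sub>E VG. R x \<psi>}))"
    using step1 eqset by (intro sum_mono) auto
  also have "\<dots> = \<Gamma> ^ (s - k v) * real (\<Sum>x\<in>X. card {\<psi>\<in>nb v \<rightarrow>\<^sub>E VG. R x \<psi>})"
    by (simp add: sum_distrib_left)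
  also have "\<dots> \<le> \<Gamma> ^ (s - k v) * real (\<Sum>x\<in>{..<r} \<rightarrow>\<^sub>E VG. card {\<psi>\<in>nb v \<rightarrow>\<^sub>E VG. R x \<psi>})"
    using X finVG Gam(2) by (intro mult_left_mono sum_mono2 of_nat_mono) (auto intro: finite_PiE)
  also have "(\<Sum>x\<in>{..<r} \<rightarrow>\<^sub>E VG. card {\<psi>\<in>nb v \<rightarrow>\<^sub>E VG. R x \<psi>})
      = (\<Sum>\<psi>\<in>nb v \<rightarrow>\<^sub>E VG. card {x\<in>{..<r} \<rightarrow>\<^sub>E VG. R x \<psi>})"
    using finVG fnb by (intro card_filter_swap) (auto intro: finite_PiE)
  also have "real \<dots> \<le> (\<Sum>\<psi>\<in>nb v \<rightarrow>\<^sub>E VG. \<tau>)"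
    unfolding of_nat_sum
  proof (rule sum_mono)
    fix \<psi> assume "\<psi> \<in> nb v \<rightarrow>\<^sub>E VG"
    show "real (card {x\<in>{..<r} \<rightarrow>\<^sub>E VG. R x \<psi>}) \<le> \<tau>"
    proof (cases "B \<psi>")
      case True
      have "{x\<in>{..<r} \<rightarrow>\<^sub>E VG. R x \<psi>} = {..<r} \<rightarrow>\<^sub>E CN (\<psi> ` nb v)"
        using True by (auto simp: R_def CN_def PiE_def Pi_def symG)
      then have "real (card {x\<in>{..<r} \<rightarrow>\<^sub>E VG. R x \<psi>}) = real (card (CN (\<psi> ` nb v))) ^ r"
        by (simp add: card_PiE)
      then show ?thesis using True by (simp add: B_def)
    next
      case False
      then have "{x\<in>{..<r} \<rightarrow>\<^sub>E VG. R x \<psi>} = {}" by (simp add: R_def)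
      then show ?thesis using tau by (simp only: card.empty of_nat_0)
    qed
  qed
  also have "(\<Sum>\<psi>\<in>nb v \<rightarrow>\<^sub>E VG. \<tau>) = real NN ^ k v * \<tau>"
    using fnb by (simp add: card_PiE)
  finally show ?thesis using Gam(2) by (simp add: mult.assoc mult_left_mono)
qed

end
context L23 begin

lemma prod_powr_ge:
  fixes P :: real
  assumes "P \<ge> 0" "P ^ r \<ge> Q" "Q \<ge> 0"
  shows "Q powr (1 / real r) \<le> P"
proof (cases "P = 0")
  case True
  then have "Q = 0" using assms r by (simp add: power_0_left)
  then show ?thesis using True by simp
next
  case False
  then have Pp: "P > 0" using assms by simp
  have "Q powr (1 / real r) \<le> (P ^ r) powr (1 / real r)"
    using assms by (intro powr_mono2) auto
  also have "\<dots> = P" using Pp r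
    by (simp add: powr_realpow[symmetric] powr_powr)
  finally show ?thesis .
qed

lemma core:
  assumes X: "X \<subseteq> {..<r} \<rightarrow>\<^sub>E VG" and Gam: "\<forall>x\<in>X. real (card (Cx x)) \<le> \<Gamma>" "\<Gamma> > 0"
    and NN: "NN > 0"
    and L: "L = (\<Sum>x\<in>X. real (card (Cx x)) ^ s)"
  shows "real (hom_count V E VG EG) \<ge>
     L / 2 * (\<Prod>v\<in>W. L / (2 * real (card W) * \<Gamma> ^ (s - k v) * real NN ^ (k v))) powr (1 / real r)"
proof -
  define \<tau> where "\<tau> v = L / (2 * real (card W) * \<Gamma> ^ (s - k v) * real NN ^ (k v))" for v
  define good where "good \<phi> = (\<forall>v\<in>W. \<not> real (card (CN (\<phi> ` nb v))) ^ r < \<tau> v)" for \<phi> :: "'a \<Rightarrow> 'b"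
  define Gs where "Gs x = {\<phi>\<in>V2 \<rightarrow>\<^sub>E Cx x. good \<phi>}" for x
  define Bad where "Bad x v = {\<phi>\<in>V2 \<rightarrow>\<^sub>E Cx x. real (card (CN (\<phi> ` nb v))) ^ r < \<tau> v}" for x v
  define Q where "Q = (\<Prod>v\<in>W. \<tau> v) powr (1 / real r)"
  have finX: "finite X" using X finite_subset finite_PiE[of "{..<r}" "\<lambda>_. VG"] finVG by blast
  have Lge: "L \<ge> 0" unfolding L by (intro sum_nonneg) auto
  have tau0: "\<tau> v \<ge> 0" for v using Lge Gam by (auto simp: \<tau>_def)
  have Q0: "Q \<ge> 0" by (simp add: Q_def)
  have finGs: "finite (Gs x)" for x using finite_PiE[of V2 "\<lambda>_. Cx x"] finV2 finCN by (auto simp: Gs_def)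
  have finBad: "finite (Bad x v)" for x v using finite_PiE[of V2 "\<lambda>_. Cx x"] finV2 finCN by (auto simp: Bad_def)
  have prodge: "(\<Prod>v\<in>W. real (card (CN (\<phi> ` nb v)))) \<ge> Q" if "\<phi> \<in> Gs x" for \<phi> x
  proof -
    have g: "\<And>v. v \<in> W \<Longrightarrow> \<tau> v \<le> real (card (CN (\<phi> ` nb v))) ^ r"
      using that by (auto simp: Gs_def good_def not_less)
    have "(\<Prod>v\<in>W. \<tau> v) \<le> (\<Prod>v\<in>W. real (card (CN (\<phi> ` nb v))) ^ r)"
      using g tau0 by (intro prod_mono) auto
    also have "\<dots> = (\<Prod>v\<in>W. real (card (CN (\<phi> ` nb v)))) ^ r" by (simp add: prod_power_distrib)
    finally show ?thesis unfolding Q_def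
      using tau0 by (intro prod_powr_ge) (auto intro: prod_nonneg)
  qed
  have "(\<Sum>x\<in>X. real (card (Gs x)) * Q) \<le> (\<Sum>x\<in>X. \<Sum>\<phi>\<in>Gs x. \<Prod>v\<in>W. real (card (CN (\<phi> ` nb v))))"
  proof (rule sum_mono)
    fix x assume "x \<in> X"
    have "real (card (Gs x)) * Q = (\<Sum>\<phi>\<in>Gs x. Q)" by simp
    also have "\<dots> \<le> (\<Sum>\<phi>\<in>Gs x. \<Prod>v\<in>W. real (card (CN (\<phi> ` nb v))))"
      using prodge by (intro sum_mono) auto
    finally show "real (card (Gs x)) * Q \<le> (\<Sum>\<phi>\<in>Gs x. \<Prod>v\<in>W. real (card (CN (\<phi> ` nb v))))" .
  qed
  also have "\<dots> \<le> real (hom_count V E VG EG)"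
  proof -
    have "(\<Sum>x\<in>X. \<Sum>\<phi>\<in>Gs x. \<Prod>v\<in>W. card (CN (\<phi> ` nb v))) \<le> hom_count V E VG EG"
      using C1[OF X, of good] by (simp add: Gs_def)
    then have "real (\<Sum>x\<in>X. \<Sum>\<phi>\<in>Gs x. \<Prod>v\<in>W. card (CN (\<phi> ` nb v))) \<le> real (hom_count V E VG EG)"
      by (simp only: of_nat_le_iff)
    then show ?thesis by simp
  qed
  finally have hom1: "(\<Sum>x\<in>X. real (card (Gs x))) * Q \<le> real (hom_count V E VG EG)"
    by (simp add: sum_distrib_right)
  have cover: "real (card (Cx x)) ^ s \<le> real (card (Gs x)) + (\<Sum>v\<in>W. real (card (Bad x v)))" for x
  proof -
    have "V2 \<rightarrow>\<^sub>E Cx x \<subseteq> Gs x \<union> (\<Union>v\<in>W. Bad x v)"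
      by (auto simp: Gs_def Bad_def good_def)
    then have "card (V2 \<rightarrow>\<^sub>E Cx x) \<le> card (Gs x \<union> (\<Union>v\<in>W. Bad x v))"
      using finGs finBad finW by (intro card_mono) auto
    also have "\<dots> \<le> card (Gs x) + card (\<Union>v\<in>W. Bad x v)" by (rule card_Un_le)
    also have "\<dots> \<le> card (Gs x) + (\<Sum>v\<in>W. card (Bad x v))" using card_UN_le[OF finW] by simp
    finally have "card (V2 \<rightarrow>\<^sub>E Cx x) \<le> card (Gs x) + (\<Sum>v\<in>W. card (Bad x v))" .
    moreover have "card (V2 \<rightarrow>\<^sub>E Cx x) = card (Cx x) ^ s" using finV2 by (simp add: card_PiE)
    ultimately show ?thesis by (metis of_nat_le_iff of_nat_add of_nat_power of_nat_sum)
  qed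
  have badv: "(\<Sum>x\<in>X. real (card (Bad x v))) \<le> L / (2 * real (card W))" if v: "v \<in> W" for v
  proof -
    have "(\<Sum>x\<in>X. real (card (Bad x v))) \<le> \<Gamma> ^ (s - k v) * real NN ^ (k v) * \<tau> v"
      unfolding Bad_def using C2[OF X _ Gam(1) _ tau0, of v] v Gam(2) by auto
    also have "\<dots> = L / (2 * real (card W))" using Gam(2) NN by (simp add: \<tau>_def)
    finally show ?thesis .
  qed
  have "L \<le> (\<Sum>x\<in>X. real (card (Gs x))) + (\<Sum>v\<in>W. \<Sum>x\<in>X. real (card (Bad x v)))"
  proof -
    have "L \<le> (\<Sum>x\<in>X. real (card (Gs x)) + (\<Sum>v\<in>W. real (card (Bad x v))))"
      unfolding L using cover by (rule sum_mono)
    also have "\<dots> = (\<Sum>x\<in>X. real (card (Gs x))) + (\<Sum>x\<in>X. \<Sum>v\<in>W. real (card (Bad x v)))"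
      by (rule sum.distrib)
    also have "(\<Sum>x\<in>X. \<Sum>v\<in>W. real (card (Bad x v))) = (\<Sum>v\<in>W. \<Sum>x\<in>X. real (card (Bad x v)))"
      by (rule sum.swap)
    finally show ?thesis .
  qed
  also have "(\<Sum>v\<in>W. \<Sum>x\<in>X. real (card (Bad x v))) \<le> (\<Sum>v\<in>W. L / (2 * real (card W)))"
    using badv by (rule sum_mono)
  also have "\<dots> \<le> L / 2"
  proof (cases "W = {}")
    case True then show ?thesis using Lge by simp
  next
    case False then have "card W > 0" using finW by (simp add: card_gt_0_iff)
    then show ?thesis by simp
  qed
  finally have "L / 2 \<le> (\<Sum>x\<in>X. real (card (Gs x)))" by simp
  then have "L / 2 * Q \<le> (\<Sum>x\<in>X. real (card (Gs x))) * Q" using Q0 by (rule mult_right_mono)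
  with hom1 show ?thesis by (simp add: Q_def \<tau>_def)
qed

end
context L23 begin

lemma cardV: "card V = r + card W + s"
proof -
  have "card V = card V1 + card V2" using part finV1 finV2 card_Un_disjoint by metis
  moreover have "card W = card V1 - card U" using U finU by (simp add: card_Diff_subset)
  moreover have "card U \<le> card V1" using U finV1 card_mono by blast
  ultimately show ?thesis using U by simp
qed

lemma core2:
  assumes X: "X \<subseteq> {..<r} \<rightarrow>\<^sub>E VG" and g: "\<gamma> > 0"
    and up: "\<forall>x\<in>X. real (card (Cx x)) \<le> 2 * \<gamma> * real NN"
    and lo: "\<forall>x\<in>X. \<gamma> * real NN \<le> real (card (Cx x)) \<or> s = d"
    and NN: "NN > 0"
  shows "real (hom_count V E VG EG) / real NN ^ card V \<ge>
     1 / 2 * (2 * (real (card W) + 1) * 2 ^ s) powr (- (real (card W) / real r))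
       * \<gamma> powr (real (s - d) + real (\<Sum>v\<in>W. k v - d) / real r)
       * ((\<Sum>x\<in>X. real (card (Cx x)) ^ d) / real NN ^ (r + d)) powr (1 + real (card W) / real r)"
    (is "_ \<ge> ?R")
proof -
  define e where "e = (\<Sum>x\<in>X. real (card (Cx x)) ^ d) / real NN ^ (r + d)"
  define N where "N = real NN"
  define w where "w = card W"
  define M0 where "M0 = 2 * (real w + 1) * 2 ^ s"
  define SK where "SK = (\<Sum>v\<in>W. k v - d)"
  have Np: "N > 0" using NN by (simp add: N_def)
  have M0p: "M0 > 0" by (simp add: M0_def)
  have e0: "e \<ge> 0" by (simp add: e_def sum_nonneg)
  have hom0: "real (hom_count V E VG EG) / real NN ^ card V \<ge> 0" by simp
  show ?thesis
  proof (cases "e = 0")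
    case True
    then show ?thesis using hom0 r by (simp add: e_def[symmetric])
  next
    case False
    then have ep: "e > 0" using e0 by simp
    define L where "L = (\<Sum>x\<in>X. real (card (Cx x)) ^ s)"
    have dles: "d \<le> s"
    proof -
      have "U \<noteq> {}" using U r by auto
      then obtain u where "u \<in> U" by blast
      then have "u \<in> V1" using U by auto
      then show ?thesis using k_ge k_le le_trans by blast
    qed
    have L0: "L \<ge> (\<gamma> * N) ^ (s - d) * N ^ (r + d) * e"
    proof -
      have ne: "N ^ (r + d) * e = (\<Sum>x\<in>X. real (card (Cx x)) ^ d)"
        using Np by (simp add: e_def N_def)
      have "(\<gamma> * N) ^ (s - d) * N ^ (r + d) * e = (\<gamma> * N) ^ (s - d) * (N ^ (r + d) * e)" by simp
      also have "\<dots> = (\<Sum>x\<in>X. (\<gamma> * N) ^ (s - d) * real (card (Cx x)) ^ d)"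
        unfolding ne by (simp add: sum_distrib_left)
      finally have "(\<gamma> * N) ^ (s - d) * N ^ (r + d) * e = (\<Sum>x\<in>X. (\<gamma> * N) ^ (s - d) * real (card (Cx x)) ^ d)" .
      also have "\<dots> \<le> L" unfolding L_def
      proof (rule sum_mono)
        fix x assume x: "x \<in> X"
        have "(\<gamma> * N) ^ (s - d) \<le> real (card (Cx x)) ^ (s - d)"
          using lo x g Np by (cases "s = d") (auto intro!: power_mono simp: N_def)
        then have "(\<gamma> * N) ^ (s - d) * real (card (Cx x)) ^ d \<le> real (card (Cx x)) ^ (s - d) * real (card (Cx x)) ^ d"
          by (intro mult_right_mono) auto
        also have "\<dots> = real (card (Cx x)) ^ s" using dles by (simp add: power_add[symmetric])
        finally show "(\<gamma> * N) ^ (s - d) * real (card (Cx x)) ^ d \<le> real (card (Cx x)) ^ s" .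
      qed
      finally show ?thesis .
    qed
    have core': "real (hom_count V E VG EG) \<ge>
      L / 2 * (\<Prod>v\<in>W. L / (2 * real w * (2 * \<gamma> * N) ^ (s - k v) * N ^ (k v))) powr (1 / real r)"
      using core[OF X up _ NN L_def] g Np by (simp add: N_def w_def)
    define low where "low v = \<gamma> ^ (k v - d) * N ^ r * e / M0" for v
    have fac: "L / (2 * real w * (2 * \<gamma> * N) ^ (s - k v) * N ^ (k v)) \<ge> low v" if v: "v \<in> W" for v
    proof -
      have vV1: "v \<in> V1" using v by auto
      have kd: "d \<le> k v" "k v \<le> s" using k_ge[OF vV1] k_le[OF vV1] by auto
      have wp: "real w \<ge> 1" using v finW by (simp add: w_def Suc_le_eq card_gt_0_iff) blast
      define i where "i = s - k v"
      define j where "j = k v - d"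
      have sd: "s - d = i + j" and kk: "k v = j + d" and si: "s - (d + j) = i" using kd by (auto simp: i_def j_def)
      have D: "2 * real w * (2 * \<gamma> * N) ^ (s - k v) * N ^ (k v) > 0" using wp g Np by simp
      have f1: "L / (2 * real w * (2 * \<gamma> * N) ^ (s - k v) * N ^ (k v))
          \<ge> (\<gamma> * N) ^ (s - d) * N ^ (r + d) * e / (2 * real w * (2 * \<gamma> * N) ^ (s - k v) * N ^ (k v))"
        using L0 D by (intro divide_right_mono) auto
      have f2: "(\<gamma> * N) ^ (s - d) * N ^ (r + d) * e / (2 * real w * (2 * \<gamma> * N) ^ (s - k v) * N ^ (k v))
          = \<gamma> ^ j * N ^ r * e / (2 * real w * 2 ^ i)"
        unfolding sd kk i_def[symmetric] using g Np wp
        by (simp add: si power_add power_mult_distrib field_simps)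
      have f3: "\<gamma> ^ j * N ^ r * e / (2 * real w * 2 ^ i) \<ge> low v"
      proof -
        have "2 * real w * 2 ^ i \<le> M0"
        proof -
          have "(2::real) ^ i \<le> 2 ^ s" by (intro power_increasing) (auto simp: i_def)
          then show ?thesis unfolding M0_def using wp
            by (intro mult_mono) auto
        qed
        moreover have "2 * real w * 2 ^ i > 0" using wp by simp
        ultimately show ?thesis unfolding low_def j_def using g Np ep
          by (intro divide_left_mono) auto
      qed
      show ?thesis using f1 f2 f3 by linarith
    qed
    have prodlow: "(\<Prod>v\<in>W. low v) = (N ^ r * e / M0) ^ w * \<gamma> ^ SK"
      by (simp add: low_def SK_def w_def prod.distrib power_sum power_mult_distrib mult.commute mult.left_commute divide_inverse)
    have lowp: "low v \<ge> 0" for v using g Np e0 M0p by (simp add: low_def)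
    have "(\<Prod>v\<in>W. low v) \<le> (\<Prod>v\<in>W. L / (2 * real w * (2 * \<gamma> * N) ^ (s - k v) * N ^ (k v)))"
      using fac lowp by (intro prod_mono) auto
    then have P1: "((N ^ r * e / M0) ^ w * \<gamma> ^ SK) powr (1 / real r)
        \<le> (\<Prod>v\<in>W. L / (2 * real w * (2 * \<gamma> * N) ^ (s - k v) * N ^ (k v))) powr (1 / real r)"
      unfolding prodlow by (intro powr_mono2) (auto simp: prodlow[symmetric] intro: prod_nonneg lowp)
    have Qeq: "((N ^ r * e / M0) ^ w * \<gamma> ^ SK) powr (1 / real r)
        = N ^ w * (e / M0) powr (real w / real r) * \<gamma> powr (real SK / real r)"
    proof -
      have a: "(N ^ r * e / M0) ^ w = N ^ (r * w) * (e / M0) ^ w"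
        by (simp add: power_mult power_mult_distrib[symmetric] times_divide_eq_right[symmetric] del: times_divide_eq_right)
      have b: "(N ^ (r * w)) powr (1 / real r) = N ^ w"
        using Np r by (simp add: powr_realpow[symmetric] powr_powr)
      have c: "((e / M0) ^ w) powr (1 / real r) = (e / M0) powr (real w / real r)"
        using ep M0p by (simp add: powr_realpow[symmetric] powr_powr)
      have dd: "(\<gamma> ^ SK) powr (1 / real r) = \<gamma> powr (real SK / real r)"
        using g by (simp add: powr_realpow[symmetric] powr_powr)
      show ?thesis unfolding a using Np ep M0p g
        by (simp add: powr_mult b c dd)
    qed
    have main: "real (hom_count V E VG EG) \<ge> (\<gamma> * N) ^ (s - d) * N ^ (r + d) * e / 2
        * (N ^ w * (e / M0) powr (real w / real r) * \<gamma> powr (real SK / real r))"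
    proof -
      have "(\<gamma> * N) ^ (s - d) * N ^ (r + d) * e / 2
        * (N ^ w * (e / M0) powr (real w / real r) * \<gamma> powr (real SK / real r))
        \<le> L / 2 * (\<Prod>v\<in>W. L / (2 * real w * (2 * \<gamma> * N) ^ (s - k v) * N ^ (k v))) powr (1 / real r)"
      proof (rule mult_mono)
        show "0 \<le> L / 2" by (simp add: L_def sum_nonneg)
        show "0 \<le> N ^ w * (e / M0) powr (real w / real r) * \<gamma> powr (real SK / real r)" using Np by simp
      qed (use L0 P1 Qeq in auto)
      with core' show ?thesis by linarith
    qed
    have R: "?R = 1 / 2 * M0 powr (- (real w / real r)) * \<gamma> powr (real (s - d) + real SK / real r)
       * e powr (1 + real w / real r)"
      by (simp add: e_def M0_def w_def SK_def)
    have eq: "(\<gamma> * N) ^ (s - d) * N ^ (r + d) * e / 2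
        * (N ^ w * (e / M0) powr (real w / real r) * \<gamma> powr (real SK / real r)) / N ^ card V
       = 1 / 2 * M0 powr (- (real w / real r)) * \<gamma> powr (real (s - d) + real SK / real r)
       * e powr (1 + real w / real r)"
    proof -
      have cV: "card V = (s - d) + (r + d) + w" using cardV dles by (simp add: w_def)
      have g1: "\<gamma> powr (real (s - d) + real SK / real r) = \<gamma> ^ (s - d) * \<gamma> powr (real SK / real r)"
        using g by (simp add: powr_add powr_realpow)
      have e1: "e powr (1 + real w / real r) = e * e powr (real w / real r)"
        using ep by (simp add: powr_add)
      have m1: "(e / M0) powr (real w / real r) = e powr (real w / real r) * M0 powr (- (real w / real r))"
        using ep M0p by (simp add: powr_divide powr_minus_divide)
      show ?thesis unfolding cV g1 e1 m1 using Np
        by (simp add: power_add power_mult_distrib field_simps)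
    qed
    have "(\<gamma> * N) ^ (s - d) * N ^ (r + d) * e / 2
        * (N ^ w * (e / M0) powr (real w / real r) * \<gamma> powr (real SK / real r)) / N ^ card V
        \<le> real (hom_count V E VG EG) / N ^ card V"
      using main Np by (intro divide_right_mono) auto
    then have "real (hom_count V E VG EG) / N ^ card V \<ge> ?R"
      unfolding R eq .
    then show ?thesis by (simp add: N_def)
  qed
qed

end
context L23 begin

lemma edge_count: "card (edge_set E) = r * s + (\<Sum>v\<in>W. k v)"
proof -
  let ?S = "SIGMA v:V1. nb v"
  let ?g = "\<lambda>(v, w). {v, w}"
  have img: "?g ` ?S = edge_set E"
  proof (rule equalityI; rule subsetI)
    fix z assume "z \<in> ?g ` ?S"
    then obtain v w where "v \<in> V1" "w \<in> nb v" "z = {v, w}" by auto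
    then show "z \<in> edge_set E" by (auto simp: edge_set_def nb_def)
  next
    fix z assume "z \<in> edge_set E"
    then obtain x y where e: "E x y" "z = {x, y}" by (auto simp: edge_set_def)
    from bip[OF e(1)] show "z \<in> ?g ` ?S"
    proof
      assume "x \<in> V1 \<and> y \<in> V2"
      then have "(x, y) \<in> ?S" using e by (auto simp: nb_def)
      then show ?thesis using e by force
    next
      assume "x \<in> V2 \<and> y \<in> V1"
      then have "(y, x) \<in> ?S" using e symH by (auto simp: nb_def)
      moreover have "z = ?g (y, x)" using e by auto
      ultimately show ?thesis by blast
    qed
  qed
  have inj: "inj_on ?g ?S"
  proof (rule inj_onI)
    fix p q assume hp: "p \<in> ?S" and hq: "q \<in> ?S" and e: "?g p = ?g q"
    obtain v w where p: "p = (v, w)" by (cases p)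
    obtain v' w' where q: "q = (v', w')" by (cases q)
    have "v \<in> V1" "w \<in> V2" "v' \<in> V1" "w' \<in> V2" using hp hq p q nb_sub by auto
    moreover have "{v, w} = {v', w'}" using e p q by simp
    ultimately show "p = q" using p q part(2) by (auto simp: doubleton_eq_iff)
  qed
  have "card (edge_set E) = card ?S" using img card_image[OF inj] by simp
  also have "\<dots> = (\<Sum>v\<in>V1. k v)" using finV1 finnb by simp
  also have "\<dots> = (\<Sum>v\<in>U. k v) + (\<Sum>v\<in>W. k v)"
    using U finV1 sum.subset_diff[of U V1 "\<lambda>v. k v"] by simp
  also have "(\<Sum>v\<in>U. k v) = r * s" using nb_U U by simp
  finally show ?thesis .
qed

lemma cardK: "card (Kbip_V r d) = r + d"
  unfolding Kbip_V_def by (subst card_Un_disjoint) (auto simp: card_image)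

end

lemma band_sum:
  fixes c f :: real
  assumes "c \<le> 1"
  shows "(\<Sum>j\<le>J. if (1/2)^(j+1) < c \<and> c \<le> 2 * (1/2)^(j+1) then f else 0)
       = (if (1/2)^(J+1) < c then f else 0)"
proof (induction J)
  case 0 then show ?case using assms by auto
next
  case (Suc J)
  have h: "2 * (1/2::real)^(Suc J + 1) = (1/2)^(J+1)" by simp
  have m: "(1/2::real)^(Suc J + 1) < (1/2)^(J+1)" by simp
  have p: "(1/2::real)^(Suc J + 1) > 0" by simp
  show ?case
  proof (cases "(1/2::real)^(J+1) < c")
    case True
    then have "\<not> c \<le> 2 * (1/2::real)^(Suc J + 1)" using h by linarith
    moreover have "(1/2::real)^(Suc J + 1) < c" using True m by linarith
    ultimately show ?thesis using Suc.IH True by simp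
  next
    case False
    then have "c \<le> 2 * (1/2::real)^(Suc J + 1)" using h by linarith
    then show ?thesis using Suc.IH False by simp
  qed
qed

lemma geom_rev:
  fixes \<rho> :: real
  assumes "0 \<le> \<rho>" "\<rho> < 1"
  shows "(\<Sum>j\<le>J. \<rho> ^ (J - j)) \<le> 1 / (1 - \<rho>)"
proof (induction J)
  case 0 then show ?case using assms by (simp add: field_simps)
next
  case (Suc J)
  have "(\<Sum>j\<le>Suc J. \<rho> ^ (Suc J - j)) = \<rho> * (\<Sum>j\<le>J. \<rho> ^ (J - j)) + 1"
  proof -
    have "(\<Sum>j\<le>Suc J. \<rho> ^ (Suc J - j)) = (\<Sum>j\<le>J. \<rho> ^ (Suc J - j)) + 1" by simp
    also have "(\<Sum>j\<le>J. \<rho> ^ (Suc J - j)) = (\<Sum>j\<le>J. \<rho> * \<rho> ^ (J - j))"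
      by (intro sum.cong) (auto simp: Suc_diff_le)
    finally show ?thesis by (simp add: sum_distrib_left)
  qed
  also have "\<dots> \<le> \<rho> * (1 / (1 - \<rho>)) + 1"
  proof -
    have "\<rho> * (\<Sum>j\<le>J. \<rho> ^ (J - j)) \<le> \<rho> * (1 / (1 - \<rho>))" using Suc.IH assms(1) by (rule mult_left_mono)
    then show ?thesis by linarith
  qed
  also have "\<dots> = 1 / (1 - \<rho>)" using assms by (simp add: field_simps)
  finally show ?case .
qed

lemma bern_half:
  assumes "a \<ge> (1::nat)"
  shows "(1 - 1 / (2 * real a)) ^ a \<ge> 1 / 2"
proof -
  have "1 + real a * (- 1 / (2 * real a)) \<le> (1 + (- 1 / (2 * real a))) ^ a"
    using assms by (intro Bernoulli_inequality) (auto simp: field_simps)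
  moreover have "1 + real a * (- 1 / (2 * real a)) = 1 / 2" using assms by (simp add: field_simps)
  ultimately show ?thesis by simp
qed


lemma pow_powr: "(x::real) > 0 \<Longrightarrow> (x ^ n) powr a = (x powr a) ^ n"
  by (simp add: powr_realpow[symmetric] powr_powr powr_power mult.commute)

context L23 begin

lemma cc_le: "real (card (Cx x)) \<le> real NN"
  using card_mono[OF finVG CN_sub] by simp

lemma cardPX: "card ({..<r} \<rightarrow>\<^sub>E VG) = NN ^ r"
  by (simp add: card_PiE)

lemma pig:
  fixes A B \<mu> :: real and a :: nat
  assumes NN: "NN > 0" and mu: "\<mu> > 0"
    and mudef: "\<mu> = (\<Sum>x\<in>{..<r} \<rightarrow>\<^sub>E VG. real (card (Cx x)) ^ d) / real NN ^ (r + d)"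
    and a: "a \<ge> 1" and A: "A = real a / real r" and B: "B \<ge> 1 / real r"
  shows "\<exists>\<gamma>>0. \<gamma> powr B * ((\<Sum>x\<in>{x\<in>{..<r} \<rightarrow>\<^sub>E VG. \<gamma> < real (card (Cx x)) / real NN \<and> real (card (Cx x)) / real NN \<le> 2 * \<gamma>}. real (card (Cx x)) ^ d) / real NN ^ (r + d)) powr A
     \<ge> 2 powr (- (real d + 1) * B / real d) * (1 / (4 * real a)) powr A * \<mu> powr (A + B / real d)"
proof -
  define N where "N = real NN"
  define PX where "PX = {..<r} \<rightarrow>\<^sub>E VG"
  define cc where "cc x = real (card (Cx x))" for x
  define c where "c x = cc x / N" for x
  define y :: real where "y = (1/2) ^ d"
  define \<gamma> :: "nat \<Rightarrow> real" where "\<gamma> j = (1/2) ^ (j + 1)" for j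
  define eb where "eb j = (\<Sum>x\<in>{x\<in>PX. \<gamma> j < c x \<and> c x \<le> 2 * \<gamma> j}. cc x ^ d) / N ^ (r + d)" for j
  have Np: "N > 0" using NN by (simp add: N_def)
  have finPX: "finite PX" unfolding PX_def using finVG by (intro finite_PiE) auto
  have ccN: "cc x \<le> N" for x using cc_le by (simp add: cc_def N_def)
  have cc0: "cc x \<ge> 0" for x by (simp add: cc_def)
  have c1: "c x \<le> 1" for x using ccN Np by (simp add: c_def)
  have cPX: "real (card PX) = N ^ r" by (simp add: PX_def cardPX N_def)
  have mu': "\<mu> = (\<Sum>x\<in>PX. cc x ^ d) / N ^ (r + d)" by (simp add: mudef PX_def cc_def N_def)
  have mu1: "\<mu> \<le> 1"
  proof -
    have "(\<Sum>x\<in>PX. cc x ^ d) \<le> (\<Sum>x\<in>PX. N ^ d)"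
      using ccN cc0 by (intro sum_mono power_mono) auto
    also have "\<dots> = N ^ (r + d)" using cPX by (simp add: power_add)
    finally show ?thesis using Np by (simp add: mu')
  qed
  have y0: "0 < y" and y1: "y < 1" using d by (auto simp: y_def power_less_one_iff)
  obtain n0 where n0: "y ^ n0 < \<mu> / 2" using real_arch_pow_inv[of "\<mu>/2" y] mu y1 by auto
  define J where "J = (LEAST J. y ^ (J + 1) \<le> \<mu> / 2)"
  have ex: "y ^ (n0 + 1) \<le> \<mu> / 2"
  proof -
    have "y ^ (n0 + 1) \<le> y ^ n0" using y0 y1 by (simp add: power_decreasing)
    then show ?thesis using n0 by simp
  qed
  have yJ1: "y ^ (J + 1) \<le> \<mu> / 2" unfolding J_def by (rule LeastI[of _ n0], rule ex)
  have yJ: "\<mu> / 2 < y ^ J"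
  proof (cases J)
    case 0 then show ?thesis using mu1 by simp
  next
    case (Suc J')
    have "\<not> y ^ (J' + 1) \<le> \<mu> / 2" using not_less_Least[of J' "\<lambda>J. y ^ (J + 1) \<le> \<mu> / 2"] Suc
      unfolding J_def by simp
    then show ?thesis using Suc by simp
  qed
  have gy: "\<gamma> J ^ d = y ^ (J + 1)" unfolding \<gamma>_def y_def by (simp only: power_mult[symmetric] mult.commute)
  have ebI: "eb j = (\<Sum>x\<in>PX. if \<gamma> j < c x \<and> c x \<le> 2 * \<gamma> j then cc x ^ d else 0) / N ^ (r + d)" for j
    unfolding eb_def using finPX by (simp add: sum.inter_filter)
  have hi: "(\<Sum>j\<le>J. eb j) = (\<Sum>x\<in>PX. if \<gamma> J < c x then cc x ^ d else 0) / N ^ (r + d)"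
  proof -
    have "(\<Sum>j\<le>J. eb j) = (\<Sum>j\<le>J. \<Sum>x\<in>PX. if \<gamma> j < c x \<and> c x \<le> 2 * \<gamma> j then cc x ^ d else 0) / N ^ (r + d)"
      by (simp add: ebI sum_divide_distrib)
    also have "(\<Sum>j\<le>J. \<Sum>x\<in>PX. if \<gamma> j < c x \<and> c x \<le> 2 * \<gamma> j then cc x ^ d else 0)
        = (\<Sum>x\<in>PX. \<Sum>j\<le>J. if \<gamma> j < c x \<and> c x \<le> 2 * \<gamma> j then cc x ^ d else 0)"
      by (rule sum.swap)
    also have "\<dots> = (\<Sum>x\<in>PX. if \<gamma> J < c x then cc x ^ d else 0)"
      unfolding \<gamma>_def using band_sum[OF c1] by simp
    finally show ?thesis .
  qed
  have lo: "(\<Sum>x\<in>PX. if \<gamma> J < c x then 0 else cc x ^ d) / N ^ (r + d) \<le> \<mu> / 2"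
  proof -
    have "(\<Sum>x\<in>PX. if \<gamma> J < c x then 0 else cc x ^ d) \<le> (\<Sum>x\<in>PX. (\<gamma> J * N) ^ d)"
    proof (rule sum_mono)
      fix x
      show "(if \<gamma> J < c x then 0 else cc x ^ d) \<le> (\<gamma> J * N) ^ d"
      proof (cases "\<gamma> J < c x")
        case False
        then have "cc x \<le> \<gamma> J * N" using Np by (simp add: c_def field_simps)
        then show ?thesis using False cc0 by (simp add: power_mono)
      qed (use Np in \<open>simp add: \<gamma>_def\<close>)
    qed
    also have "\<dots> = N ^ (r + d) * y ^ (J + 1)" using cPX gy by (simp add: power_mult_distrib power_add)
    also have "\<dots> \<le> N ^ (r + d) * (\<mu> / 2)" using yJ1 Np by (intro mult_left_mono) auto
    finally have "(\<Sum>x\<in>PX. if \<gamma> J < c x then 0 else cc x ^ d) \<le> N ^ (r + d) * (\<mu> / 2)" .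
    then show ?thesis using Np by (simp add: pos_divide_le_eq mult.commute)
  qed
  have split: "\<mu> = (\<Sum>x\<in>PX. if \<gamma> J < c x then cc x ^ d else 0) / N ^ (r + d)
     + (\<Sum>x\<in>PX. if \<gamma> J < c x then 0 else cc x ^ d) / N ^ (r + d)"
    unfolding mu' by (simp add: add_divide_distrib[symmetric] sum.distrib[symmetric] if_distrib cong: if_cong)
  have sumeb: "(\<Sum>j\<le>J. eb j) \<ge> \<mu> / 2" using hi lo split by linarith
  define \<rho> where "\<rho> = 1 - 1 / (2 * real a)"
  have rho: "1/2 \<le> \<rho>" "\<rho> < 1" using a by (auto simp: \<rho>_def field_simps)
  define w where "w j = \<rho> ^ (J - j) / (4 * real a)" for j
  have sumw: "(\<Sum>j\<le>J. w j * \<mu>) \<le> \<mu> / 2"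
  proof -
    have "(\<Sum>j\<le>J. w j * \<mu>) = \<mu> / (4 * real a) * (\<Sum>j\<le>J. \<rho> ^ (J - j))"
      by (simp add: w_def sum_distrib_left sum_divide_distrib[symmetric] mult.commute mult.left_commute)
    also have "\<dots> \<le> \<mu> / (4 * real a) * (1 / (1 - \<rho>))"
      using geom_rev[of \<rho> J] rho mu a by (intro mult_left_mono) auto
    also have "\<dots> = \<mu> / 2" using a by (simp add: \<rho>_def field_simps)
    finally show ?thesis .
  qed
  obtain j where j: "j \<le> J" "eb j \<ge> w j * \<mu>"
  proof (rule ccontr)
    assume "\<not> thesis"
    then have "\<forall>j\<le>J. eb j < w j * \<mu>" using that by force
    then have "(\<Sum>j\<le>J. eb j) < (\<Sum>j\<le>J. w j * \<mu>)" by (intro sum_strict_mono) auto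
    then show False using sumeb sumw by linarith
  qed
  have A0: "A \<ge> 0" by (simp add: A)
  have B0: "B \<ge> 0" using B by (smt (verit) of_nat_0_le_iff divide_nonneg_nonneg)
  have rp: "\<rho> > 0" using rho by simp
  have gJp: "\<gamma> J > 0" by (simp add: \<gamma>_def)
  have gjJ: "\<gamma> j = \<gamma> J * 2 ^ (J - j)"
  proof -
    have "(J + 1) = (j + 1) + (J - j)" using j by simp
    then have "\<gamma> J = \<gamma> j * (1/2) ^ (J - j)" unfolding \<gamma>_def by (metis power_add)
    then show ?thesis by (simp add: power_one_over field_simps)
  qed
  have i: "\<gamma> J powr B \<ge> 2 powr (- (real d + 1) * B / real d) * \<mu> powr (B / real d)"
  proof -
    have "\<gamma> J ^ d \<ge> \<mu> / 2 ^ (d + 1)"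
    proof -
      have "\<gamma> J ^ d = y * y ^ J" using gy by simp
      also have "\<dots> \<ge> y * (\<mu> / 2)" using yJ y0 by (intro mult_left_mono) auto
      finally show ?thesis by (simp add: y_def power_one_over)
    qed
    then have "(\<mu> / 2 ^ (d + 1)) powr (1 / real d) \<le> (\<gamma> J ^ d) powr (1 / real d)"
      using mu by (intro powr_mono2) auto
    also have "(\<gamma> J ^ d) powr (1 / real d) = \<gamma> J"
      using gJp d by (simp add: powr_realpow[symmetric] powr_powr)
    finally have "((\<mu> / 2 ^ (d + 1)) powr (1 / real d)) powr B \<le> \<gamma> J powr B"
      using B0 mu by (intro powr_mono2) auto
    also have "((\<mu> / 2 ^ (d + 1)) powr (1 / real d)) powr B = \<mu> powr (B / real d) / (2 ^ (d + 1)) powr (B / real d)"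
      by (simp add: powr_powr powr_divide)
    also have "(2 ^ (d + 1) :: real) powr (B / real d) = 2 powr ((real d + 1) * B / real d)"
    proof -
      have "(2::real) ^ (d + 1) = 2 powr (real d + 1)"
        using powr_realpow[of 2 "d + 1"] by (simp add: add.commute)
      then show ?thesis by (simp add: powr_powr)
    qed
    finally have f: "\<mu> powr (B / real d) / 2 powr ((real d + 1) * B / real d) \<le> \<gamma> J powr B" .
    have "2 powr (- (real d + 1) * B / real d) = 1 / 2 powr ((real d + 1) * B / real d)"
      using powr_minus_divide[of 2 "(real d + 1) * B / real d"]
      by (simp only: minus_divide_left mult_minus_left)
    then show ?thesis using f by simp
  qed
  have ii: "((2::real) ^ (J - j)) powr B * (\<rho> ^ (J - j)) powr A \<ge> 1"
  proof -
    have base: "2 powr B * \<rho> powr A \<ge> 1"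
    proof -
      have "2 powr (1 / real r) \<le> (2::real) powr B" using B by (intro powr_mono) auto
      moreover have "(1/2) powr (1 / real r) \<le> \<rho> powr A"
      proof -
        have "\<rho> powr A = (\<rho> ^ a) powr (1 / real r)"
          using rp by (simp add: A powr_realpow[symmetric] powr_powr)
        moreover have "(1/2) powr (1 / real r) \<le> (\<rho> ^ a) powr (1 / real r)"
          using bern_half[OF a] by (intro powr_mono2) (auto simp: \<rho>_def)
        ultimately show ?thesis by simp
      qed
      ultimately have "2 powr (1 / real r) * (1/2) powr (1 / real r) \<le> 2 powr B * \<rho> powr A"
        by (intro mult_mono) auto
      moreover have "2 powr (1 / real r) * (1/2::real) powr (1 / real r) = 1"
        by (simp add: powr_mult[symmetric])
      ultimately show ?thesis by simp
    qed
    have "((2::real) ^ (J - j)) powr B * (\<rho> ^ (J - j)) powr A = (2 powr B * \<rho> powr A) ^ (J - j)"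
      using rp by (simp add: pow_powr power_mult_distrib)
    also have "\<dots> \<ge> 1" using base by (rule one_le_power)
    finally show ?thesis .
  qed
  have iii: "eb j powr A \<ge> (\<rho> ^ (J - j)) powr A * (1 / (4 * real a)) powr A * \<mu> powr A"
  proof -
    have "(w j * \<mu>) powr A \<le> eb j powr A"
      using j A0 mu rp by (intro powr_mono2) (auto simp: w_def)
    moreover have "w j * \<mu> = \<rho> ^ (J - j) * (1 / (4 * real a)) * \<mu>" by (simp add: w_def)
    moreover have "(\<rho> ^ (J - j) * (1 / (4 * real a)) * \<mu>) powr A = (\<rho> ^ (J - j)) powr A * (1 / (4 * real a)) powr A * \<mu> powr A"
      using rp mu by (simp only: powr_mult)
    ultimately show ?thesis by simp
  qed
  have "\<gamma> j powr B * eb j powr A \<ge> 2 powr (- (real d + 1) * B / real d) * (1 / (4 * real a)) powr A * \<mu> powr (A + B / real d)"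
  proof -
    have "\<gamma> j powr B = \<gamma> J powr B * ((2::real) ^ (J - j)) powr B" using gjJ by (simp add: powr_mult)
    then have "\<gamma> j powr B * eb j powr A \<ge> \<gamma> J powr B * ((2::real) ^ (J - j)) powr B
         * ((\<rho> ^ (J - j)) powr A * (1 / (4 * real a)) powr A * \<mu> powr A)"
      using iii by (simp add: mult_left_mono)
    moreover have "\<gamma> J powr B * ((2::real) ^ (J - j)) powr B
         * ((\<rho> ^ (J - j)) powr A * (1 / (4 * real a)) powr A * \<mu> powr A)
       = (((2::real) ^ (J - j)) powr B * (\<rho> ^ (J - j)) powr A) * (\<gamma> J powr B * (1 / (4 * real a)) powr A * \<mu> powr A)"
      by (simp add: algebra_simps)
    moreover have "(((2::real) ^ (J - j)) powr B * (\<rho> ^ (J - j)) powr A) * (\<gamma> J powr B * (1 / (4 * real a)) powr A * \<mu> powr A)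
       \<ge> \<gamma> J powr B * (1 / (4 * real a)) powr A * \<mu> powr A"
    proof -
      have "0 \<le> \<gamma> J powr B * (1 / (4 * real a)) powr A * \<mu> powr A" by simp
      from mult_right_mono[OF ii this] show ?thesis by simp
    qed
    moreover have "\<gamma> J powr B * (1 / (4 * real a)) powr A * \<mu> powr A
       \<ge> 2 powr (- (real d + 1) * B / real d) * \<mu> powr (B / real d) * (1 / (4 * real a)) powr A * \<mu> powr A"
      using i by (intro mult_right_mono) auto
    moreover have "2 powr (- (real d + 1) * B / real d) * \<mu> powr (B / real d) * (1 / (4 * real a)) powr A * \<mu> powr A
       = 2 powr (- (real d + 1) * B / real d) * (1 / (4 * real a)) powr A * \<mu> powr (A + B / real d)"
      by (simp add: powr_add algebra_simps)
    ultimately show ?thesis by linarith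
  qed
  moreover have "eb j = (\<Sum>x\<in>{x\<in>{..<r} \<rightarrow>\<^sub>E VG. \<gamma> j < real (card (Cx x)) / real NN \<and> real (card (Cx x)) / real NN \<le> 2 * \<gamma> j}. real (card (Cx x)) ^ d) / real NN ^ (r + d)"
    by (simp add: eb_def PX_def c_def cc_def N_def)
  ultimately show ?thesis using gJp gjJ by (intro exI[of _ "\<gamma> j"]) auto
qed

end

lemma neg_powr_ge:
  fixes x y a b :: real
  assumes "x > 0" "y > 0" "x powr a \<le> y powr b"
  shows "x powr (- a) \<ge> y powr (- b)"
  using assms by (simp add: powr_minus_divide frac_le)

lemma const_bound:
  fixes r w s d n :: nat and Bx SK :: real
  assumes r: "r \<ge> 1" and s: "s \<ge> 1" and d: "d \<ge> 1" and B0: "0 \<le> Bx" and B1: "Bx \<le> real s + SK"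
    and SK: "SK \<le> real w * real s" and n: "n = r + w + s"
  shows "(2 * real n) powr (- (2 * real n ^ 2)) \<le>
    1 / 2 * (2 * (real w + 1) * 2 ^ s) powr (- (real w / real r))
    * (2 powr (- (real d + 1) * Bx / real d) * (1 / (4 * real (r + w))) powr (real (r + w) / real r))"
proof -
  define T where "T = 2 * real n"
  define M0 :: real where "M0 = 2 * (real w + 1) * 2 ^ s"
  define a where "a = r + w"
  have T2: "T \<ge> 2" using n r by (simp add: T_def)
  have Tp: "T > 0" using T2 by simp
  have M01: "M0 \<ge> 1"
  proof -
    have "1 * 1 \<le> (2 * (real w + 1)) * (2::real) ^ s" by (intro mult_mono) auto
    then show ?thesis by (simp add: M0_def)
  qed
  have a1: "real a \<ge> 1" using r by (simp add: a_def)
  have divle: "x / real r \<le> x" if "x \<ge> 0" for x :: real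
  proof -
    have "x * 1 \<le> x * real r" using r that by (intro mult_left_mono) auto
    then show ?thesis using r by (simp add: divide_le_eq)
  qed
  have f1: "T powr (- 1) \<le> 1 / 2" using T2 by (simp add: powr_minus_divide)
  have f2: "T powr (- (real ((s + 1) * w))) \<le> M0 powr (- (real w / real r))"
  proof (rule neg_powr_ge)
    show "M0 > 0" using M01 by simp
    show "T > 0" by (rule Tp)
    have "M0 powr (real w / real r) \<le> M0 powr (real w)"
      using M01 divle[of "real w"] by (intro powr_mono) auto
    also have "M0 \<le> T powr (real (s + 1))"
    proof -
      have "2 * (real w + 1) \<le> T" using n r by (simp add: T_def)
      moreover have "(2::real) ^ s \<le> T ^ s" using T2 by (intro power_mono) auto
      ultimately have "M0 \<le> T * T ^ s" unfolding M0_def using T2 by (intro mult_mono) auto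
      also have "T * T ^ s = T powr (real (s + 1))" using Tp powr_realpow[of T "s + 1"] by simp
      finally show ?thesis .
    qed
    then have "M0 powr (real w) \<le> (T powr (real (s + 1))) powr (real w)"
      using M01 by (intro powr_mono2) auto
    also have "\<dots> = T powr (real ((s + 1) * w))" by (simp add: powr_powr algebra_simps)
    finally show "M0 powr (real w / real r) \<le> T powr (real ((s + 1) * w))" .
  qed
  have f3: "T powr (- (2 * Bx)) \<le> 2 powr (- (real d + 1) * Bx / real d)"
  proof -
    have c1: "(real d + 1) * Bx / real d \<le> 2 * Bx"
    proof -
      have "(real d + 1) / real d \<le> 2" using d by (simp add: field_simps)
      then have "(real d + 1) / real d * Bx \<le> 2 * Bx" using B0 by (intro mult_right_mono) auto
      then show ?thesis by simp
    qed
    have s1: "2 powr ((real d + 1) * Bx / real d) \<le> (2::real) powr (2 * Bx)"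
      by (rule powr_mono[OF c1]) simp
    have s2: "(2::real) powr (2 * Bx) \<le> T powr (2 * Bx)"
      by (rule powr_mono2) (use T2 B0 in linarith)+
    have "T powr (- (2 * Bx)) \<le> 2 powr (- ((real d + 1) * Bx / real d))"
      by (rule neg_powr_ge) (use Tp s1 s2 in linarith)+
    moreover have eq: "- (real d + 1) * Bx / real d = - ((real d + 1) * Bx / real d)"
      by (simp only: mult_minus_left minus_divide_left)
    ultimately show ?thesis by (simp only: eq)
  qed
  have f4: "T powr (- (2 * real a)) \<le> (1 / (4 * real a)) powr (real a / real r)"
  proof -
    have a0: "4 * real a > 0" using a1 by simp
    have s1: "(4 * real a) powr (real a / real r) \<le> (4 * real a) powr (real a)"
      by (rule powr_mono) (use a1 divle[of "real a"] in linarith)+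
    have le4: "4 * real a \<le> T powr 2"
    proof -
      have "real a \<le> real n" using n by (simp add: a_def)
      then have "4 * real a \<le> 4 * real n" by simp
      also have "\<dots> \<le> T * T" using T2 by (simp add: T_def)
      also have "T * T = T powr 2" using Tp powr_realpow[of T 2] by (simp add: power2_eq_square)
      finally show ?thesis .
    qed
    have s2: "(4 * real a) powr (real a) \<le> (T powr 2) powr (real a)"
      by (rule powr_mono2) (use a1 le4 in linarith)+
    have s3: "(T powr 2) powr (real a) = T powr (2 * real a)" by (simp add: powr_powr)
    have "T powr (- (2 * real a)) \<le> (4 * real a) powr (- (real a / real r))"
      by (rule neg_powr_ge) (use Tp a0 s1 s2 s3 in linarith)+
    also have "(4 * real a) powr (- (real a / real r)) = (1 / (4 * real a)) powr (real a / real r)"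
      using a0 by (simp add: powr_minus_divide powr_divide)
    finally show ?thesis .
  qed
  have prod: "T powr (- 1) * T powr (- (real ((s + 1) * w))) * (T powr (- (2 * Bx)) * T powr (- (2 * real a)))
     \<le> 1 / 2 * M0 powr (- (real w / real r)) * (2 powr (- (real d + 1) * Bx / real d) * (1 / (4 * real a)) powr (real a / real r))"
    using f1 f2 f3 f4 by (intro mult_mono) auto
  have eqT: "T powr (- 1) * T powr (- (real ((s + 1) * w))) * (T powr (- (2 * Bx)) * T powr (- (2 * real a)))
     = T powr (- (1 + real ((s + 1) * w) + 2 * Bx + 2 * real a))"
  proof -
    have "T powr (- 1) * T powr (- (real ((s + 1) * w))) * (T powr (- (2 * Bx)) * T powr (- (2 * real a)))
       = T powr (- 1 + - (real ((s + 1) * w)) + (- (2 * Bx) + - (2 * real a)))"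
      by (simp only: powr_add)
    also have "- 1 + - (real ((s + 1) * w)) + (- (2 * Bx) + - (2 * real a)) = - (1 + real ((s + 1) * w) + 2 * Bx + 2 * real a)"
      by simp
    finally show ?thesis .
  qed
  have E: "1 + real ((s + 1) * w) + 2 * Bx + 2 * real a \<le> 2 * real n ^ 2"
  proof -
    have "2 * Bx \<le> 2 * real s + 2 * (real w * real s)" using B1 SK by linarith
    moreover have "real r * real s \<ge> 1"
    proof -
      have "1 * 1 \<le> real r * real s" using r s by (intro mult_mono) auto
      then show ?thesis by simp
    qed
    moreover have "real w * real s \<ge> real w"
    proof -
      have "real w * 1 \<le> real w * real s" using s by (intro mult_left_mono) auto
      then show ?thesis by simp
    qed
    moreover have "real r * real w \<ge> real w"
    proof -
      have "1 * real w \<le> real r * real w" using r by (intro mult_right_mono) auto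
      then show ?thesis by simp
    qed
    moreover have "real r * real r \<ge> real r"
    proof -
      have "real r * 1 \<le> real r * real r" using r by (intro mult_left_mono) auto
      then show ?thesis by simp
    qed
    moreover have "real s * real s \<ge> real s"
    proof -
      have "real s * 1 \<le> real s * real s" using s by (intro mult_left_mono) auto
      then show ?thesis by simp
    qed
    moreover have "real w * real w \<ge> 0" by simp
    moreover have "real n ^ 2 = real r * real r + real w * real w + real s * real s + 2 * (real r * real w)
       + 2 * (real r * real s) + 2 * (real w * real s)"
      unfolding n by (simp add: power2_eq_square algebra_simps)
    moreover have "real ((s + 1) * w) = real w * real s + real w" by (simp add: algebra_simps)
    moreover have "real a = real r + real w" by (simp add: a_def)
    ultimately show ?thesis by linarith
  qed
  have "T powr (- (2 * real n ^ 2)) \<le> T powr (- (1 + real ((s + 1) * w) + 2 * Bx + 2 * real a))"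
    using E T2 by (intro powr_mono) auto
  with prod eqT show ?thesis by (simp add: T_def M0_def a_def)
qed

context L23 begin

lemma final:
  "hom_density V E VG EG \<ge> (2 * real (card V)) powr (- (2 * real (card V) ^ 2)) *
     hom_density (Kbip_V r d) (Kbip_E r d) VG EG powr (real (card (edge_set E)) / real (r * d))"
proof -
  define p where "p = hom_density (Kbip_V r d) (Kbip_E r d) VG EG"
  define n where "n = card V"
  define m where "m = card (edge_set E)"
  define w where "w = card W"
  define SK where "SK = (\<Sum>v\<in>W. k v - d)"
  define a where "a = r + w"
  define A where "A = 1 + real w / real r"
  define Bx where "Bx = real (s - d) + real SK / real r"
  define C0 :: real where "C0 = 1 / 2 * (2 * (real w + 1) * 2 ^ s) powr (- (real w / real r))"
  define K where "K = 2 powr (- (real d + 1) * Bx / real d) * (1 / (4 * real a)) powr A"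
  define N where "N = real NN"
  have r0: "real r > 0" using r by simp
  obtain u where uU: "u \<in> U" using U r by (metis card.empty ex_in_conv not_one_le_zero)
  have uV1: "u \<in> V1" using uU U by auto
  have dles: "d \<le> s" using k_ge[OF uV1] k_le[OF uV1] by simp
  have s1: "s \<ge> 1" using dles d by simp
  have sumk: "(\<Sum>v\<in>W. k v) = SK + w * d"
  proof -
    have "(\<Sum>v\<in>W. k v) = (\<Sum>v\<in>W. (k v - d) + d)"
      using k_ge by (intro sum.cong) auto
    also have "\<dots> = SK + w * d" by (simp add: sum.distrib SK_def w_def)
    finally show ?thesis .
  qed
  have mdef: "m = r * s + SK + w * d" using edge_count sumk by (simp add: m_def)
  have expo: "real m / real (r * d) = A + Bx / real d"
    using r0 d dles by (simp add: mdef A_def Bx_def of_nat_diff field_simps)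
  have SKle: "real SK \<le> real w * real s"
  proof -
    have "SK \<le> (\<Sum>v\<in>W. s)" unfolding SK_def using k_le by (intro sum_mono) (meson DiffD1 diff_le_self le_trans)
    then have h: "SK \<le> card W * s" by simp
    then have "real SK \<le> real (card W * s)" by (rule of_nat_mono)
    then show ?thesis by (simp add: w_def)
  qed
  have B0: "Bx \<ge> 0" by (simp add: Bx_def)
  have Ble: "Bx \<le> real s + real SK"
  proof -
    have "real SK / real r \<le> real SK"
    proof -
      have "real SK * 1 \<le> real SK * real r" using r by (intro mult_left_mono) auto
      then show ?thesis using r0 by (simp add: divide_le_eq)
    qed
    then show ?thesis by (simp add: Bx_def)
  qed
  have nrws: "n = r + w + s" using cardV by (simp add: n_def w_def)
  have Aeq: "A = real a / real r" using r0 by (simp add: A_def a_def field_simps)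
  have cb: "(2 * real n) powr (- (2 * real n ^ 2)) \<le> C0 * K"
    using const_bound[OF r s1 d B0 Ble SKle nrws] by (simp add: C0_def K_def a_def Aeq)
  have K1: "K \<le> 1"
  proof -
    have "2 powr (- (real d + 1) * Bx / real d) \<le> 2 powr 0"
      using B0 d by (intro powr_mono) (auto simp: divide_nonpos_pos mult_nonpos_nonneg)
    moreover have "(1 / (4 * real a)) powr A \<le> 1"
    proof -
      have "(4 * real a) powr A \<ge> 1" using r by (intro ge_one_powr_ge_zero) (auto simp: a_def A_def)
      then have "1 / (4 * real a) powr A \<le> 1" by (simp add: divide_le_eq)
      then show ?thesis by (simp add: powr_divide)
    qed
    ultimately show ?thesis unfolding K_def by (simp add: mult_le_one)
  qed
  have K0: "K \<ge> 0" by (simp add: K_def)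
  have C00: "C0 \<ge> 0" by (simp add: C0_def)
  have p0: "p \<ge> 0" by (simp add: p_def hom_density_def)
  have tH0: "hom_density V E VG EG \<ge> 0" by (simp add: hom_density_def)
  show ?thesis
  proof (cases "p = 0")
    case True
    then show ?thesis using tH0 by (simp add: p_def[symmetric])
  next
    case False
    then have pp: "p > 0" using p0 by simp
    have NN: "NN > 0"
    proof (rule ccontr)
      assume "\<not> NN > 0"
      then have "NN = 0" by simp
      then have "p = 0" using r by (simp add: p_def hom_density_def cardK)
      then show False using pp by simp
    qed
    define \<mu> where "\<mu> = (\<Sum>x\<in>{..<r} \<rightarrow>\<^sub>E VG. real (card (Cx x)) ^ d) / real NN ^ (r + d)"
    have pmu: "p \<le> \<mu>"
    proof -
      have "real (hom_count (Kbip_V r d) (Kbip_E r d) VG EG) \<le> (\<Sum>x\<in>{..<r} \<rightarrow>\<^sub>E VG. real (card (Cx x)) ^ d)"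
      proof -
        have "real (hom_count (Kbip_V r d) (Kbip_E r d) VG EG) \<le> real (\<Sum>x\<in>{..<r} \<rightarrow>\<^sub>E VG. card (Cx x) ^ d)"
          by (rule of_nat_mono[OF stepA])
        then show ?thesis by simp
      qed
      then show ?thesis unfolding p_def \<mu>_def hom_density_def cardK using NN
        by (intro divide_right_mono) auto
    qed
    have mup: "\<mu> > 0" using pp pmu by simp
    have main: "hom_density V E VG EG \<ge> C0 * K * \<mu> powr (A + Bx / real d)"
    proof (cases "Bx = 0")
      case True
      then have sd: "s = d" and SK0: "SK = 0" using r0 dles
        by (auto simp: Bx_def add_nonneg_eq_0_iff)
      have "hom_density V E VG EG \<ge> C0 * (1/2) powr Bx * \<mu> powr A"
      proof -
        have up0: "\<forall>x\<in>{..<r} \<rightarrow>\<^sub>E VG. real (card (Cx x)) \<le> 2 * (1/2) * real NN" using cc_le by simp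
        have lo0: "\<forall>x\<in>{..<r} \<rightarrow>\<^sub>E VG. (1/2) * real NN \<le> real (card (Cx x)) \<or> s = d" using sd by simp
        have hg: "(0::real) < 1/2" by simp
        show ?thesis unfolding hom_density_def C0_def Bx_def A_def \<mu>_def w_def SK_def
          by (rule core2[OF subset_refl hg up0 lo0 NN])
      qed
      moreover have "C0 * K * \<mu> powr (A + Bx / real d) \<le> C0 * (1/2) powr Bx * \<mu> powr A"
      proof -
        have "C0 * K \<le> C0 * 1" using K1 C00 by (rule mult_left_mono)
        then have "C0 * K * \<mu> powr A \<le> C0 * 1 * \<mu> powr A" by (rule mult_right_mono) simp
        then show ?thesis using True by simp
      qed
      ultimately show ?thesis by linarith
    next
      case False
      then have Bp: "Bx > 0" using B0 by simp
      have B1r: "Bx \<ge> 1 / real r"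
      proof (cases "s = d")
        case True
        then have "real SK / real r > 0" using Bp by (simp add: Bx_def)
        then have "SK > 0" using r0 by (simp add: zero_less_divide_iff)
        then have "real SK \<ge> 1" by simp
        then have "real SK / real r \<ge> 1 / real r" using r0 by (simp add: divide_right_mono)
        then show ?thesis using True by (simp add: Bx_def)
      next
        case False
        then have "real (s - d) \<ge> 1" using dles by simp
        moreover have "1 / real r \<le> 1" using r by simp
        moreover have "real SK / real r \<ge> 0" by simp
        ultimately have "1 / real r \<le> real (s - d) + real SK / real r" by linarith
        then show ?thesis by (simp only: Bx_def)
      qed
      have a1: "a \<ge> 1" using r by (simp add: a_def)
      obtain \<gamma> where g: "\<gamma> > 0" and gB: "\<gamma> powr Bx * ((\<Sum>x\<in>{x\<in>{..<r} \<rightarrow>\<^sub>E VG. \<gamma> < real (card (Cx x)) / real NN \<and> real (card (Cx x)) / real NN \<le> 2 * \<gamma>}. real (card (Cx x)) ^ d) / real NN ^ (r + d)) powr A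
        \<ge> K * \<mu> powr (A + Bx / real d)"
        using pig[OF NN mup \<mu>_def a1 Aeq B1r] by (auto simp: K_def)
      let ?X = "{x\<in>{..<r} \<rightarrow>\<^sub>E VG. \<gamma> < real (card (Cx x)) / real NN \<and> real (card (Cx x)) / real NN \<le> 2 * \<gamma>}"
      have up: "\<forall>x\<in>?X. real (card (Cx x)) \<le> 2 * \<gamma> * real NN" using NN by (auto simp: divide_le_eq mult.commute)
      have lo: "\<forall>x\<in>?X. \<gamma> * real NN \<le> real (card (Cx x)) \<or> s = d" using NN by (auto simp: less_divide_eq mult.commute less_imp_le)
      have "hom_density V E VG EG \<ge> C0 * (\<gamma> powr Bx * ((\<Sum>x\<in>?X. real (card (Cx x)) ^ d) / real NN ^ (r + d)) powr A)"
      proof -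
        have "hom_density V E VG EG \<ge> C0 * \<gamma> powr Bx * ((\<Sum>x\<in>?X. real (card (Cx x)) ^ d) / real NN ^ (r + d)) powr A"
          unfolding hom_density_def C0_def Bx_def A_def w_def SK_def
          by (rule core2[OF _ g up lo NN]) auto
        then show ?thesis by (simp only: mult.assoc)
      qed
      moreover have "C0 * (K * \<mu> powr (A + Bx / real d)) \<le> C0 * (\<gamma> powr Bx * ((\<Sum>x\<in>?X. real (card (Cx x)) ^ d) / real NN ^ (r + d)) powr A)"
        using gB C00 by (intro mult_left_mono) auto
      ultimately show ?thesis by (simp add: mult.assoc)
    qed
    have "(2 * real n) powr (- (2 * real n ^ 2)) * p powr (real m / real (r * d))
        \<le> (C0 * K) * \<mu> powr (A + Bx / real d)"
    proof (rule mult_mono)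
      show "p powr (real m / real (r * d)) \<le> \<mu> powr (A + Bx / real d)"
        unfolding expo[symmetric] using pp pmu by (intro powr_mono2) auto
    qed (use cb C00 K0 in auto)
    with main show ?thesis by (simp add: p_def n_def m_def)
  qed
qed

end

theorem lemma2p3:
  fixes V :: "'a set" and E :: "'a \<Rightarrow> 'a \<Rightarrow> bool"
    and V1 V2 U :: "'a set" and n m r d :: nat
    and VG :: "'b set" and EG :: "'b \<Rightarrow> 'b \<Rightarrow> bool"
  assumes H: "simple_graph V E"
    and part: "V1 \<union> V2 = V" "V1 \<inter> V2 = {}"
    and bip: "\<And>x y. E x y \<Longrightarrow> (x \<in> V1 \<and> y \<in> V2) \<or> (x \<in> V2 \<and> y \<in> V1)"
    and n: "n = card V" and m: "m = card (edge_set E)"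
    and r: "r \<ge> 1" and U: "U \<subseteq> V1" "card U = r"
    and Ucomplete: "\<And>u v. u \<in> U \<Longrightarrow> v \<in> V2 \<Longrightarrow> E u v"
    and d: "d \<ge> 1" and deg: "\<And>v. v \<in> V1 \<Longrightarrow> degree E v \<ge> d"
    and G: "simple_graph VG EG"
  shows "hom_density V E VG EG \<ge>
    (2 * real n) powr (- (2 * real n ^ 2)) *
    hom_density (Kbip_V r d) (Kbip_E r d) VG EG powr (real m / real (r * d))"
proof -
  have L: "L23 V E V1 V2 U r d VG EG"
    unfolding L23_def using H part bip r U Ucomplete d deg G by blast
  show ?thesis unfolding n m by (rule L23.final[OF L])
qed

end
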